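(* Let $n\ge 1$. The maximum number of nonzero entries of an $n\times n\times n$ ASHM equals $m_n=\frac{n(n^2+2)}{3}$, and this maximum is attained by the diamond ASHM $\mathfrak D_n=[F_n^1,F_n^2,\ldots,F_n^n]$. Moreover, for each $k\in\{1,\ldots,n\}$: (i) if $A$ is an $n\times n$ ASM for which there exist $n\times n$ ASMs $A_1,\ldots,A_{k-1},A_{k+1},\ldots,A_n$ such that $[A_1,\ldots,A_{k-1},A,A_{k+1},\ldots,A_n]$ is an ASHM, then $A$ has at most as many nonzero entries as $F_n^k$; (ii) more precisely, for each such $A$ and each $i\in\{1,\ldots,n\}$, the number of nonzeros in row $i$ (resp. column $i$) of $A$ is at most the number of nonzeros in row $i$ (resp. column $i$) of $F_n^k$.
   Context: An $n\times n$ alternating sign matrix (ASM) is an $n\times n$ matrix with entries in $\{0,1,-1\}$ such that in every row and every column the nonzero entries alternate in sign, beginning and ending with $+1$. An $n\times n\times n$ hypermatrix $A=[a_{ijk}]$ is written $A=[A_1,\ldots,A_n]$ with $A_k=[a_{ijk}]_{i,j}$ its $k$-th horizontal plane. $A$ is an alternating sign hypermatrix (ASHM) if all entries lie in $\{0,\pm1\}$ and in every line (row line: fixed $j,k$; column line: fixed $i,k$; vertical line: fixed $i,j$) the nonzeros alternate in sign beginning and ending with $+1$; equivalently every plane obtained by fixing one index is an ASM. For $1\le k\le n$, $F_n^k=[f_{ij}]$ is the $n\times n$ matrix with $f_{ij}=(-1)^{i+j+k+1}$ if $k+1\le i+j\le 2n+1-k$ and $|i-j|\le k-1$, and $f_{ij}=0$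 otherwise (so $F_n^1=I_n$ and $F_n^n$ is the anti-diagonal permutation matrix; each $F_n^k$ is an ASM). The diamond ASHM is $\mathfrak D_n=[F_n^1,F_n^2,\ldots,F_n^n]$, which is an ASHM. *)

theory Defs
  imports Main
begin

text \<open>Matrices are functions nat => nat => int, indexed 1..n (entries outside are ignored).
  Hypermatrices are functions nat => nat => nat => int, H i j k = a_ijk, indexed 1..n.\<close>

definition alt_signs :: "int list \<Rightarrow> bool" where
  "alt_signs xs \<longleftrightarrow> odd (length xs) \<and> (\<forall>i<length xs. xs ! i = (if even i then 1 else -1))"

definition as_line :: "nat \<Rightarrow> (nat \<Rightarrow> int) \<Rightarrow> bool" where
  "as_line n f \<longleftrightarrow> (\<forall>i\<in>{1..n}. f i \<in> {-1, 0, 1}) \<and>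
     alt_signs (filter (\<lambda>x. x \<noteq> 0) (map f [1..<n+1]))"

definition is_ASM :: "nat \<Rightarrow> (nat \<Rightarrow> nat \<Rightarrow> int) \<Rightarrow> bool" where
  "is_ASM n A \<longleftrightarrow> (\<forall>i\<in>{1..n}. as_line n (\<lambda>j. A i j)) \<and> (\<forall>j\<in>{1..n}. as_line n (\<lambda>i. A i j))"

definition is_ASHM :: "nat \<Rightarrow> (nat \<Rightarrow> nat \<Rightarrow> nat \<Rightarrow> int) \<Rightarrow> bool" where
  "is_ASHM n H \<longleftrightarrow>
     (\<forall>j\<in>{1..n}. \<forall>k\<in>{1..n}. as_line n (\<lambda>i. H i j k)) \<and>
     (\<forall>i\<in>{1..n}. \<forall>k\<in>{1..n}. as_line n (\<lambda>j. H i j k)) \<and>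
     (\<forall>i\<in>{1..n}. \<forall>j\<in>{1..n}. as_line n (\<lambda>k. H i j k))"

definition nnz3 :: "nat \<Rightarrow> (nat \<Rightarrow> nat \<Rightarrow> nat \<Rightarrow> int) \<Rightarrow> nat" where
  "nnz3 n H = card {(i, j, k). i \<in> {1..n} \<and> j \<in> {1..n} \<and> k \<in> {1..n} \<and> H i j k \<noteq> 0}"

definition nnz :: "nat \<Rightarrow> (nat \<Rightarrow> nat \<Rightarrow> int) \<Rightarrow> nat" where
  "nnz n A = card {(i, j). i \<in> {1..n} \<and> j \<in> {1..n} \<and> A i j \<noteq> 0}"

definition row_nnz :: "nat \<Rightarrow> (nat \<Rightarrow> nat \<Rightarrow> int) \<Rightarrow> nat \<Rightarrow> nat" where
  "row_nnz n A i = card {j \<in> {1..n}. A i j \<noteq> 0}"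

definition col_nnz :: "nat \<Rightarrow> (nat \<Rightarrow> nat \<Rightarrow> int) \<Rightarrow> nat \<Rightarrow> nat" where
  "col_nnz n A j = card {i \<in> {1..n}. A i j \<noteq> 0}"

definition F :: "nat \<Rightarrow> nat \<Rightarrow> nat \<Rightarrow> nat \<Rightarrow> int" where
  "F n k i j = (if int k + 1 \<le> int i + int j \<and> int i + int j \<le> 2 * int n + 1 - int k
                   \<and> \<bar>int i - int j\<bar> \<le> int k - 1
                then (-1) ^ (i + j + k + 1) else 0)"

definition diamond :: "nat \<Rightarrow> nat \<Rightarrow> nat \<Rightarrow> nat \<Rightarrow> int" where
  "diamond n i j k = F n k i j"

end

theory Submission imports Defs begin

lemma alt_prefix:
  assumes "\<forall>i<length ys. ys!i = (if even i then 1 else (-1::int))" "m \<le> length ys"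
  shows "sum_list (take m ys) = (if even m then 0 else 1)"
  using assms(2)
proof (induction m)
  case 0 then show ?case by simp
next
  case (Suc m)
  then have "m < length ys" by simp
  then have "take (Suc m) ys = take m ys @ [ys!m]" by (simp add: take_Suc_conv_app_nth)
  then show ?case using Suc assms(1) \<open>m < length ys\<close> by auto
qed

lemma sum_list_filter_nz: "sum_list (filter (\<lambda>x. x \<noteq> 0) xs) = sum_list (xs::int list)"
  by (induction xs) auto

lemma filter_take_prefix:
  "filter P (take t xs) = take (length (filter P (take t xs))) (filter P xs)"
proof -
  have "filter P xs = filter P (take t xs) @ filter P (drop t xs)"
    by (metis append_take_drop_id filter_append)
  then show ?thesis by (metis append_eq_conv_conj)
qed

lemma line_prefix:
  assumes "as_line n f" "t \<le> n"
  shows "sum f {1..t} \<in> {0,1}"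
proof -
  define xs where "xs = map f [1..<n+1]"
  define ys where "ys = filter (\<lambda>x. x \<noteq> 0) xs"
  have alt: "odd (length ys)" "\<forall>i<length ys. ys!i = (if even i then 1 else -1)"
    using assms(1) unfolding as_line_def alt_signs_def ys_def xs_def by auto
  have "sum f {1..t} = sum f (set [1..<t+1])" by (metis atLeastLessThanSuc_atLeastAtMost set_upt Suc_eq_plus1)
  also have "\<dots> = sum_list (map f [1..<t+1])" by (rule sum_set_upt_conv_sum_list_nat)
  also have "sum_list (map f [1..<t+1]) = sum_list (take t xs)"
  proof -
    have tk: "take t [1..<n+1] = [1..<1+t]" using assms(2) by (intro take_upt) simp
    show ?thesis unfolding xs_def take_map tk by (simp only: add.commute)
  qed
  also have "\<dots> = sum_list (filter (\<lambda>x. x \<noteq> 0) (take t xs))"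
    by (simp add: sum_list_filter_nz)
  also have "\<dots> = sum_list (take (length (filter (\<lambda>x. x \<noteq> 0) (take t xs))) ys)"
    unfolding ys_def by (rule arg_cong[where f=sum_list], rule filter_take_prefix)
  finally have eq: "sum f {1..t} = sum_list (take (length (filter (\<lambda>x. x \<noteq> 0) (take t xs))) ys)" .
  have "length (filter (\<lambda>x. x \<noteq> 0) (take t xs)) \<le> length ys"
  proof -
    have "filter (\<lambda>x. x \<noteq> 0) xs = filter (\<lambda>x. x \<noteq> 0) (take t xs) @ filter (\<lambda>x. x \<noteq> 0) (drop t xs)"
      by (metis append_take_drop_id filter_append)
    then show ?thesis unfolding ys_def by (metis le_add1 length_append)
  qed
  then have "sum_list (take (length (filter (\<lambda>x. x \<noteq> 0) (take t xs))) ys) \<in> {0,1}"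
    using alt_prefix[OF alt(2)] by simp
  then show ?thesis using eq by simp
qed

lemma line_total:
  assumes "as_line n f"
  shows "sum f {1..n} = 1"
proof -
  define xs where "xs = map f [1..<n+1]"
  define ys where "ys = filter (\<lambda>x. x \<noteq> 0) xs"
  have alt: "odd (length ys)" "\<forall>i<length ys. ys!i = (if even i then 1 else -1)"
    using assms(1) unfolding as_line_def alt_signs_def ys_def xs_def by auto
  have "sum f {1..n} = sum f (set [1..<n+1])" by (metis atLeastLessThanSuc_atLeastAtMost set_upt Suc_eq_plus1)
  also have "\<dots> = sum_list xs" unfolding xs_def by (rule sum_set_upt_conv_sum_list_nat)
  also have "\<dots> = sum_list ys" unfolding ys_def by (simp add: sum_list_filter_nz)
  also have "\<dots> = sum_list (take (length ys) ys)" by simp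
  also have "\<dots> = 1" using alt_prefix[OF alt(2), of "length ys"] alt(1) by simp
  finally show ?thesis .
qed

lemma line_vals:
  assumes "as_line n f" "q \<in> {1..n}"
  shows "f q \<in> {-1,0,1}"
  using assms unfolding as_line_def by auto


lemma card_ind: "finite S \<Longrightarrow> int (card {m\<in>S. Q m}) = (\<Sum>m\<in>S. if Q m then 1 else 0)"
  by (simp add: sum.inter_filter[symmetric])

lemma line_split:
  assumes "as_line n f" "t \<le> n"
  shows "sum f {Suc t..n} = 1 - sum f {1..t}"
proof -
  have "{1..n} = {1..t} \<union> {Suc t..n}" using assms(2) by auto
  then have "sum f {1..n} = sum f {1..t} + sum f {Suc t..n}"
    by (simp add: sum.union_disjoint)
  then show ?thesis using line_total[OF assms(1)] by simp
qed

lemma line_nnz: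
  assumes "as_line n f"
  shows "card {q\<in>{1..n}. f q \<noteq> 0} = 2 * card {q\<in>{1..n}. f q = -1} + 1"
proof -
  have v: "\<forall>q\<in>{1..n}. f q \<in> {-1,0,1}" using line_vals[OF assms] by blast
  have "int (card {q\<in>{1..n}. f q \<noteq> 0}) = (\<Sum>q\<in>{1..n}. if f q \<noteq> 0 then 1 else 0)"
    by (rule card_ind) simp
  also have "\<dots> = (\<Sum>q\<in>{1..n}. f q + 2 * (if f q = -1 then 1 else 0))"
    by (rule sum.cong) (use v in auto)
  also have "\<dots> = sum f {1..n} + 2 * (\<Sum>q\<in>{1..n}. if f q = -1 then 1 else 0)"
    by (simp add: sum.distrib sum_distrib_left)
  also have "\<dots> = 1 + 2 * int (card {q\<in>{1..n}. f q = -1})"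
    using line_total[OF assms] card_ind[of "{1..n}" "\<lambda>q. f q = -1"] by simp
  finally show ?thesis by linarith
qed

lemma cross:
  fixes L :: "nat \<Rightarrow> nat \<Rightarrow> int"
  assumes rows: "\<forall>m\<in>{1..n}. as_line n (\<lambda>q. L m q)"
    and cols: "\<forall>q\<in>{1..n}. as_line n (\<lambda>m. L m q)"
    and p: "p \<in> {1..n}"
  shows "card {m\<in>{1..n}. L m p \<noteq> 0} \<le> 2*p-1 \<and> card {m\<in>{1..n}. L m p \<noteq> 0} \<le> 2*(n-p)+1"
proof -
  define N where "N = {m\<in>{1..n}. L m p = -1}"
  have nz: "card {m\<in>{1..n}. L m p \<noteq> 0} = 2 * card N + 1"
    unfolding N_def using line_nnz[of n "\<lambda>m. L m p"] cols p by blast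
  have fN: "finite N" unfolding N_def by simp
  have NS: "N \<subseteq> {1..n}" unfolding N_def by auto
  have pre: "sum (L m) {1..p-1} = 1 \<and> sum (L m) {Suc p..n} = 1" if "m \<in> N" for m
  proof -
    have m: "m \<in> {1..n}" "L m p = -1" using that unfolding N_def by auto
    have l: "as_line n (L m)" using rows m(1) by (metis)
    have a: "sum (L m) {1..p} \<in> {0,1}" using line_prefix[OF l] p by auto
    have b: "sum (L m) {1..p-1} \<in> {0,1}" using line_prefix[OF l, of "p-1"] p by auto
    have "{1..p} = insert p {1..p-1}" using p by auto
    moreover have "sum (L m) (insert p {1..p-1}) = L m p + sum (L m) {1..p-1}"
      by (rule sum.insert) auto
    ultimately have "sum (L m) {1..p} = L m p + sum (L m) {1..p-1}" by simp
    then have "sum (L m) {1..p-1} = 1" "sum (L m) {1..p} = 0" using a b m(2) by auto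
    moreover have "sum (L m) {Suc p..n} = 1 - sum (L m) {1..p}" using line_split[OF l] p by auto
    ultimately show ?thesis by simp
  qed
  have nonneg1: "sum (L m) {1..p-1} \<ge> 0" if "m \<in> {1..n}" for m
    using line_prefix[of n "L m" "p-1"] rows that p by force
  have nonneg2: "sum (L m) {Suc p..n} \<ge> 0" if "m \<in> {1..n}" for m
  proof -
    have l: "as_line n (L m)" using rows that by metis
    show ?thesis using line_split[OF l, of p] line_prefix[OF l, of p] p by auto
  qed
  have "int (card N) = (\<Sum>m\<in>N. sum (L m) {1..p-1})" using pre by simp
  also have "\<dots> \<le> (\<Sum>m\<in>{1..n}. sum (L m) {1..p-1})"
    by (rule sum_mono2) (use NS nonneg1 in auto)
  also have "\<dots> = (\<Sum>q\<in>{1..p-1}. \<Sum>m\<in>{1..n}. L m q)" by (rule sum.swap)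
  also have "\<dots> = (\<Sum>q\<in>{1..p-1}. 1)"
    by (rule sum.cong) (use cols p line_total in auto)
  finally have c1: "int (card N) \<le> int (p - 1)" by simp
  have "int (card N) = (\<Sum>m\<in>N. sum (L m) {Suc p..n})" using pre by simp
  also have "\<dots> \<le> (\<Sum>m\<in>{1..n}. sum (L m) {Suc p..n})"
    by (rule sum_mono2) (use NS nonneg2 in auto)
  also have "\<dots> = (\<Sum>q\<in>{Suc p..n}. \<Sum>m\<in>{1..n}. L m q)" by (rule sum.swap)
  also have "\<dots> = (\<Sum>q\<in>{Suc p..n}. 1)"
    by (rule sum.cong) (use cols p line_total in auto)
  finally have c2: "int (card N) \<le> int (n - p)" by simp
  show ?thesis using nz c1 c2 p by auto
qed




lemma upt_split: "i \<le> j \<Longrightarrow> j \<le> k \<Longrightarrow> [i..<k] = [i..<j] @ [j..<k]"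
  using upt_add_eq_append[of i j "k-j"] by simp

lemma interval_line:
  fixes g :: "nat \<Rightarrow> int"
  assumes "1 \<le> lo" "lo \<le> hi" "hi \<le> n" "even (lo + c)" "even (hi + c)"
    and g: "\<And>x. g x = (if lo \<le> x \<and> x \<le> hi then (-1)^(x+c) else 0)"
  shows "as_line n g"
proof -
  have split: "[1..<n+1] = [1..<lo] @ [lo..<hi+1] @ [hi+1..<n+1]"
  proof -
    have "[1..<n+1] = [1..<lo] @ [lo..<n+1]" using assms(1-3) by (intro upt_split) auto
    moreover have "[lo..<n+1] = [lo..<hi+1] @ [hi+1..<n+1]" using assms(1-3) by (intro upt_split) auto
    ultimately show ?thesis by simp
  qed
  have f1: "filter (\<lambda>x. x \<noteq> 0) (map g [1..<lo]) = []"
    by (auto simp: filter_empty_conv g)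
  have f3: "filter (\<lambda>x. x \<noteq> 0) (map g [hi+1..<n+1]) = []"
    by (auto simp: filter_empty_conv g)
  have f2: "filter (\<lambda>x. x \<noteq> 0) (map g [lo..<hi+1]) = map (\<lambda>x. (-1)^(x+c)) [lo..<hi+1]"
  proof -
    have "map g [lo..<hi+1] = map (\<lambda>x. (-1)^(x+c)) [lo..<hi+1]"
      by (rule map_cong) (auto simp: g)
    moreover have "filter (\<lambda>x. x \<noteq> 0) (map (\<lambda>x. (-1::int)^(x+c)) [lo..<hi+1]) = map (\<lambda>x. (-1)^(x+c)) [lo..<hi+1]"
      by (rule filter_True) auto
    ultimately show ?thesis by simp
  qed
  have fl: "filter (\<lambda>x. x \<noteq> 0) (map g [1..<n+1]) = map (\<lambda>x. (-1::int)^(x+c)) [lo..<hi+1]"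
    unfolding split map_append filter_append f1 f2 f3 by simp
  have vals: "\<forall>i\<in>{1..n}. g i \<in> {-1,0,1}"
    by (auto simp: g) (metis neg_one_even_power neg_one_odd_power)
  have "alt_signs (map (\<lambda>x. (-1::int)^(x+c)) [lo..<hi+1])"
    unfolding alt_signs_def
  proof (intro conjI allI impI)
    show "odd (length (map (\<lambda>x. (-1::int)^(x+c)) [lo..<hi+1]))"
    proof -
      have "length (map (\<lambda>x. (-1::int)^(x+c)) [lo..<hi+1]) = hi + 1 - lo"
        by (simp only: length_map length_upt)
      moreover have "odd (hi + 1 - lo)" using assms(2,4,5) by presburger
      ultimately show ?thesis by simp
    qed
    fix i assume "i < length (map (\<lambda>x. (-1::int)^(x+c)) [lo..<hi+1])"
    then have "i < hi + 1 - lo" by (simp only: length_map length_upt)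
    then have "map (\<lambda>x. (-1::int)^(x+c)) [lo..<hi+1] ! i = (-1)^(lo+i+c)" by (simp del: upt_Suc)
    also have "\<dots> = (if even i then 1 else -1)"
      using assms(4) by (simp add: minus_one_power_iff)
    finally show "map (\<lambda>x. (-1::int)^(x+c)) [lo..<hi+1] ! i = (if even i then 1 else -1)" .
  qed
  then show ?thesis unfolding as_line_def using fl vals by simp
qed

lemma F_sym:
  "F n k i j = (if i+1 \<le> j+k \<and> j+1 \<le> i+k \<and> k+1 \<le> i+j \<and> i+j+k \<le> 2*n+1
                then (-1)^(i+j+k+1) else 0)"
proof -
  have "(int k + 1 \<le> int i + int j \<and> int i + int j \<le> 2 * int n + 1 - int k
                   \<and> \<bar>int i - int j\<bar> \<le> int k - 1) \<longleftrightarrow>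
        (i+1 \<le> j+k \<and> j+1 \<le> i+k \<and> k+1 \<le> i+j \<and> i+j+k \<le> 2*n+1)" (is "?A = ?B") by linarith
  show ?thesis unfolding F_def by (simp only: \<open>?A = ?B\<close>)
qed


definition Dc :: "nat \<Rightarrow> nat \<Rightarrow> nat \<Rightarrow> nat \<Rightarrow> bool" where
  "Dc n i j k \<longleftrightarrow> i+1 \<le> j+k \<and> j+1 \<le> i+k \<and> k+1 \<le> i+j \<and> i+j+k \<le> 2*n+1"

lemma F_Dc: "F n k i j = (if Dc n i j k then (-1)^(i+j+k+1) else 0)"
  unfolding F_sym Dc_def by (rule refl)

lemma Dc_perm: "Dc n i j k = Dc n j k i" "Dc n i j k = Dc n i k j"
  unfolding Dc_def by auto

lemma diamond_line:
  assumes "a \<in> {1..n}" "b \<in> {1..n}"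
  shows "as_line n (\<lambda>x. if Dc n a b x then (-1::int)^(a+b+x+1) else 0)"
proof (rule interval_line[where lo = "if a \<le> b then b - a + 1 else a - b + 1"
      and hi = "if a + b \<le> n + 1 then a + b - 1 else 2*n+1-a-b" and c = "a+b+1"])
  fix x
  have "Dc n a b x \<longleftrightarrow> (if a \<le> b then b - a + 1 else a - b + 1) \<le> x \<and> x \<le> (if a + b \<le> n + 1 then a + b - 1 else 2*n+1-a-b)"
    unfolding Dc_def using assms by auto
  then show "(if Dc n a b x then (-1::int)^(a+b+x+1) else 0) =
     (if (if a \<le> b then b - a + 1 else a - b + 1) \<le> x \<and> x \<le> (if a + b \<le> n + 1 then a + b - 1 else 2*n+1-a-b)
      then (-1)^(x+(a+b+1)) else 0)" by (simp add: ac_simps)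
qed (use assms in \<open>auto\<close>)

lemma diamond_ASHM: "is_ASHM n (diamond n)"
proof -
  have "as_line n (\<lambda>i. diamond n i j k)" if "j \<in> {1..n}" "k \<in> {1..n}" for j k
  proof -
    have "(\<lambda>i. diamond n i j k) = (\<lambda>x. if Dc n j k x then (-1::int)^(j+k+x+1) else 0)"
      by (rule ext) (simp add: diamond_def F_Dc Dc_perm(1)[of n _ j k] ac_simps)
    then show ?thesis using diamond_line[OF that] by simp
  qed
  moreover have "as_line n (\<lambda>j. diamond n i j k)" if "i \<in> {1..n}" "k \<in> {1..n}" for i k
  proof -
    have "(\<lambda>j. diamond n i j k) = (\<lambda>x. if Dc n i k x then (-1::int)^(i+k+x+1) else 0)"
      by (rule ext) (simp add: diamond_def F_Dc Dc_perm(2)[of n i _ k] ac_simps)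
    then show ?thesis using diamond_line[OF that] by simp
  qed
  moreover have "as_line n (\<lambda>k. diamond n i j k)" if "i \<in> {1..n}" "j \<in> {1..n}" for i j
  proof -
    have "(\<lambda>k. diamond n i j k) = (\<lambda>x. if Dc n i j x then (-1::int)^(i+j+x+1) else 0)"
      by (rule ext) (simp add: diamond_def F_Dc)
    then show ?thesis using diamond_line[OF that] by simp
  qed
  ultimately show ?thesis unfolding is_ASHM_def by blast
qed


lemma sum_desc: "2 * (\<Sum>i\<in>{1..n}. int n + 1 - int i) = int n * (int n + 1)"
proof -
  have "(\<Sum>i\<in>{1..n}. int n + 1 - int i) = (\<Sum>i\<in>{1..n}. int n + 1) - (\<Sum>i\<in>{1..n}. int i)"
    by (simp add: sum_subtractf)
  then show ?thesis using double_gauss_sum_from_Suc_0[of n, where 'a=int]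
    by (simp add: algebra_simps)
qed

lemma abs_sum: "3 * (\<Sum>i\<in>{1..n}. \<Sum>k\<in>{1..n}. \<bar>int i - int k\<bar>) = int n ^ 3 - int n"
proof (induction n)
  case 0 then show ?case by simp
next
  case (Suc n)
  have ins: "{1..Suc n} = insert (Suc n) {1..n}" by auto
  have A: "(\<Sum>k\<in>{1..Suc n}. \<bar>int i - int k\<bar>) = (int n + 1 - int i) + (\<Sum>k\<in>{1..n}. \<bar>int i - int k\<bar>)"
    if "i \<in> {1..n}" for i
    using that unfolding ins by (simp add: sum.insert)
  have B: "(\<Sum>k\<in>{1..Suc n}. \<bar>int (Suc n) - int k\<bar>) = (\<Sum>k\<in>{1..n}. int n + 1 - int k)"
    unfolding ins by (simp add: sum.insert) (rule sum.cong, auto)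
  have "(\<Sum>i\<in>{1..Suc n}. \<Sum>k\<in>{1..Suc n}. \<bar>int i - int k\<bar>)
      = (\<Sum>k\<in>{1..Suc n}. \<bar>int (Suc n) - int k\<bar>) + (\<Sum>i\<in>{1..n}. \<Sum>k\<in>{1..Suc n}. \<bar>int i - int k\<bar>)"
    unfolding ins by (subst sum.insert) (auto simp del: of_nat_Suc)
  also have "(\<Sum>i\<in>{1..n}. \<Sum>k\<in>{1..Suc n}. \<bar>int i - int k\<bar>)
      = (\<Sum>i\<in>{1..n}. int n + 1 - int i) + (\<Sum>i\<in>{1..n}. \<Sum>k\<in>{1..n}. \<bar>int i - int k\<bar>)"
    using A by (simp add: sum.distrib ac_simps)
  finally show ?case using B Suc.IH sum_desc[of n] by (simp add: algebra_simps power3_eq_cube)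
qed

definition R :: "nat \<Rightarrow> nat \<Rightarrow> nat \<Rightarrow> int" where
  "R n i k = int n - \<bar>int n + 1 - int i - int k\<bar> - \<bar>int i - int k\<bar>"

lemma R_sum: "3 * (\<Sum>k\<in>{1..n}. \<Sum>i\<in>{1..n}. R n i k) = int n ^ 3 + 2 * int n"
proof -
  have refl: "(\<Sum>k\<in>{1..n}. \<Sum>i\<in>{1..n}. \<bar>int n + 1 - int i - int k\<bar>)
      = (\<Sum>k\<in>{1..n}. \<Sum>i\<in>{1..n}. \<bar>int i - int k\<bar>)"
  proof (rule sum.cong[OF refl])
    fix k assume k: "k \<in> {1..n}"
    have "(\<Sum>i\<in>{1..n}. \<bar>int n + 1 - int i - int k\<bar>) = (\<Sum>i\<in>{1..n}. \<bar>int n + 1 - int (n + 1 - i) - int k\<bar>)"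
      using sum.atLeastAtMost_rev[of "\<lambda>i. \<bar>int n + 1 - int i - int k\<bar>" 1 n] by simp
    also have "\<dots> = (\<Sum>i\<in>{1..n}. \<bar>int i - int k\<bar>)"
      by (rule sum.cong) (auto simp: of_nat_diff)
    finally show "(\<Sum>i\<in>{1..n}. \<bar>int n + 1 - int i - int k\<bar>) = (\<Sum>i\<in>{1..n}. \<bar>int i - int k\<bar>)" .
  qed
  have sw: "(\<Sum>k\<in>{1..n}. \<Sum>i\<in>{1..n}. \<bar>int i - int k\<bar>) = (\<Sum>i\<in>{1..n}. \<Sum>k\<in>{1..n}. \<bar>int i - int k\<bar>)"
    by (rule sum.swap)
  have "(\<Sum>k\<in>{1..n}. \<Sum>i\<in>{1..n}. R n i k) = (\<Sum>k\<in>{1..n}. \<Sum>i\<in>{1..n}. int n)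
     - (\<Sum>k\<in>{1..n}. \<Sum>i\<in>{1..n}. \<bar>int n + 1 - int i - int k\<bar>)
     - (\<Sum>k\<in>{1..n}. \<Sum>i\<in>{1..n}. \<bar>int i - int k\<bar>)"
    unfolding R_def by (simp add: sum_subtractf)
  then show ?thesis using refl sw abs_sum[of n] by (simp add: algebra_simps power3_eq_cube)
qed


lemma F_nz: "F n k i j \<noteq> 0 \<longleftrightarrow> Dc n i j k"
  by (simp add: F_Dc)

lemma row_F: assumes "i \<in> {1..n}" "k \<in> {1..n}"
  shows "int (row_nnz n (F n k) i) = R n i k"
proof -
  define lo where "lo = (if i \<le> k then k - i + 1 else i - k + 1)"
  define hi where "hi = (if i + k \<le> n + 1 then i + k - 1 else 2*n+1-i-k)"
  have "{j \<in> {1..n}. F n k i j \<noteq> 0} = {lo..hi}"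
    unfolding F_nz Dc_def lo_def hi_def using assms by auto
  then have "row_nnz n (F n k) i = Suc hi - lo" unfolding row_nnz_def by simp
  moreover have "lo \<le> hi" unfolding lo_def hi_def using assms by auto
  ultimately show ?thesis unfolding R_def lo_def hi_def using assms by auto
qed

lemma col_F: "col_nnz n (F n k) j = row_nnz n (F n k) j"
proof -
  have "F n k i j = F n k j i" for i j by (simp add: F_Dc Dc_def ac_simps conj_ac)
  then show ?thesis unfolding col_nnz_def row_nnz_def by simp
qed

lemma card_ind_nat: "finite S \<Longrightarrow> card {m\<in>S. Q m} = (\<Sum>m\<in>S. if Q m then 1 else 0)"
  by (simp add: sum.inter_filter[symmetric])

lemma nnz_rows: "nnz n A = (\<Sum>i\<in>{1..n}. row_nnz n A i)"
proof -
  have "{(i, j). i \<in> {1..n} \<and> j \<in> {1..n} \<and> A i j \<noteq> 0} = Sigma {1..n} (\<lambda>i. {j\<in>{1..n}. A i j \<noteq> 0})"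
    by auto
  then show ?thesis unfolding nnz_def row_nnz_def by (simp add: card_SigmaI)
qed

lemma nnz3_planes: "nnz3 n H = (\<Sum>k\<in>{1..n}. nnz n (\<lambda>i j. H i j k))"
proof -
  have "{(i, j, k). i \<in> {1..n} \<and> j \<in> {1..n} \<and> k \<in> {1..n} \<and> H i j k \<noteq> 0}
      = Sigma {1..n} (\<lambda>i. Sigma {1..n} (\<lambda>j. {k\<in>{1..n}. H i j k \<noteq> 0}))"
    by auto
  then have "nnz3 n H = (\<Sum>i\<in>{1..n}. \<Sum>j\<in>{1..n}. card {k\<in>{1..n}. H i j k \<noteq> 0})"
    unfolding nnz3_def by (simp add: card_SigmaI)
  also have "\<dots> = (\<Sum>i\<in>{1..n}. \<Sum>j\<in>{1..n}. \<Sum>k\<in>{1..n}. if H i j k \<noteq> 0 then 1 else 0)"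
    by (intro sum.cong refl) (rule card_ind_nat, simp)
  also have "\<dots> = (\<Sum>i\<in>{1..n}. \<Sum>k\<in>{1..n}. \<Sum>j\<in>{1..n}. if H i j k \<noteq> 0 then 1 else 0)"
    by (rule sum.cong[OF refl], rule sum.swap)
  also have "\<dots> = (\<Sum>k\<in>{1..n}. \<Sum>i\<in>{1..n}. \<Sum>j\<in>{1..n}. if H i j k \<noteq> 0 then 1 else 0)"
    by (rule sum.swap)
  also have "\<dots> = (\<Sum>k\<in>{1..n}. nnz n (\<lambda>i j. H i j k))"
    unfolding nnz_rows row_nnz_def by (intro sum.cong refl) (rule card_ind_nat[symmetric], simp)
  finally show ?thesis .
qed

lemma diamond_count: "3 * nnz3 n (diamond n) = n * (n^2 + 2)"
proof -
  have "int (nnz3 n (diamond n)) = (\<Sum>k\<in>{1..n}. \<Sum>i\<in>{1..n}. int (row_nnz n (F n k) i))"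
    unfolding nnz3_planes nnz_rows diamond_def by simp
  also have "\<dots> = (\<Sum>k\<in>{1..n}. \<Sum>i\<in>{1..n}. R n i k)"
    by (intro sum.cong refl) (simp add: row_F)
  finally have "3 * int (nnz3 n (diamond n)) = int n ^ 3 + 2 * int n" using R_sum by simp
  then have "int (3 * nnz3 n (diamond n)) = int (n * (n^2 + 2))"
    by (simp add: algebra_simps power2_eq_square power3_eq_cube)
  then show ?thesis by (simp only: of_nat_eq_iff)
qed


lemma R_ge:
  assumes "c \<le> 2*i-1" "c \<le> 2*(n-i)+1" "c \<le> 2*k-1" "c \<le> 2*(n-k)+1" "i \<in> {1..n}" "k \<in> {1..n}"
  shows "int c \<le> R n i k"
proof -
  have "int c \<le> 2*int i-1" "int c \<le> 2*(int n-int i)+1" "int c \<le> 2*int k-1" "int c \<le> 2*(int n-int k)+1"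
    using assms by auto
  then show ?thesis unfolding R_def by arith
qed

lemma row_bound:
  assumes H: "is_ASHM n H" and i: "i \<in> {1..n}" and k: "k \<in> {1..n}"
  shows "card {j\<in>{1..n}. H i j k \<noteq> 0} \<le> row_nnz n (F n k) i"
proof -
  have a: "card {j\<in>{1..n}. H i j k \<noteq> 0} \<le> 2*k-1 \<and> card {j\<in>{1..n}. H i j k \<noteq> 0} \<le> 2*(n-k)+1"
    using cross[of n "\<lambda>j q. H i j q" k] H i k unfolding is_ASHM_def by blast
  have b: "card {j\<in>{1..n}. H i j k \<noteq> 0} \<le> 2*i-1 \<and> card {j\<in>{1..n}. H i j k \<noteq> 0} \<le> 2*(n-i)+1"
    using cross[of n "\<lambda>j q. H q j k" i] H i k unfolding is_ASHM_def by blast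
  have "int (card {j\<in>{1..n}. H i j k \<noteq> 0}) \<le> R n i k"
    using a b i k by (intro R_ge) auto
  then show ?thesis using row_F[OF i k] by linarith
qed

lemma col_bound:
  assumes H: "is_ASHM n H" and j: "j \<in> {1..n}" and k: "k \<in> {1..n}"
  shows "card {i\<in>{1..n}. H i j k \<noteq> 0} \<le> row_nnz n (F n k) j"
proof -
  have a: "card {i\<in>{1..n}. H i j k \<noteq> 0} \<le> 2*k-1 \<and> card {i\<in>{1..n}. H i j k \<noteq> 0} \<le> 2*(n-k)+1"
    using cross[of n "\<lambda>i q. H i j q" k] H j k unfolding is_ASHM_def by blast
  have b: "card {i\<in>{1..n}. H i j k \<noteq> 0} \<le> 2*j-1 \<and> card {i\<in>{1..n}. H i j k \<noteq> 0} \<le> 2*(n-j)+1"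
    using cross[of n "\<lambda>i q. H i q k" j] H j k unfolding is_ASHM_def by blast
  have "int (card {i\<in>{1..n}. H i j k \<noteq> 0}) \<le> R n j k"
    using a b j k by (intro R_ge) auto
  then show ?thesis using row_F[OF j k] by linarith
qed

lemma plane_bound:
  assumes H: "is_ASHM n H" and k: "k \<in> {1..n}"
  shows "nnz n (\<lambda>i j. H i j k) \<le> nnz n (F n k)"
  unfolding nnz_rows row_nnz_def[of n "\<lambda>i j. H i j k"]
  by (rule sum_mono) (use row_bound[OF H _ k] in auto)

theorem mainTheorem2:
  fixes n :: nat
  assumes "n \<ge> 1"
  shows "Max {nnz3 n H | H. is_ASHM n H} = n * (n^2 + 2) div 3
    \<and> is_ASHM n (diamond n) \<and> nnz3 n (diamond n) = n * (n^2 + 2) div 3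
    \<and> (\<forall>k\<in>{1..n}. \<forall>A. is_ASM n A \<and>
          (\<exists>H. is_ASHM n H \<and> (\<forall>i\<in>{1..n}. \<forall>j\<in>{1..n}. H i j k = A i j))
        \<longrightarrow> nnz n A \<le> nnz n (F n k)
          \<and> (\<forall>i\<in>{1..n}. row_nnz n A i \<le> row_nnz n (F n k) i
                        \<and> col_nnz n A i \<le> col_nnz n (F n k) i))"
proof -
  have dc: "nnz3 n (diamond n) = n * (n^2 + 2) div 3"
    using diamond_count[of n] by simp
  have le: "nnz3 n H \<le> nnz3 n (diamond n)" if "is_ASHM n H" for H
  proof -
    have "nnz3 n H = (\<Sum>k\<in>{1..n}. nnz n (\<lambda>i j. H i j k))" by (rule nnz3_planes)
    also have "\<dots> \<le> (\<Sum>k\<in>{1..n}. nnz n (F n k))"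
      by (rule sum_mono) (use plane_bound[OF that] in auto)
    also have "\<dots> = nnz3 n (diamond n)" unfolding nnz3_planes diamond_def by simp
    finally show ?thesis .
  qed
  have mx: "Max {nnz3 n H | H. is_ASHM n H} = nnz3 n (diamond n)"
  proof (rule Max_eqI)
    show "finite {nnz3 n H | H. is_ASHM n H}"
      by (rule finite_subset[of _ "{..nnz3 n (diamond n)}"]) (use le in auto)
  qed (use le diamond_ASHM in auto)
  have part3: "nnz n A \<le> nnz n (F n k) \<and> (\<forall>i\<in>{1..n}. row_nnz n A i \<le> row_nnz n (F n k) i
                        \<and> col_nnz n A i \<le> col_nnz n (F n k) i)"
    if k: "k \<in> {1..n}" and H: "is_ASHM n H" and HA: "\<forall>i\<in>{1..n}. \<forall>j\<in>{1..n}. H i j k = A i j" for k A H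
  proof -
    have r: "row_nnz n A i = card {j\<in>{1..n}. H i j k \<noteq> 0}" if "i \<in> {1..n}" for i
      unfolding row_nnz_def using HA that by (intro arg_cong[where f=card]) auto
    have c: "col_nnz n A j = card {i\<in>{1..n}. H i j k \<noteq> 0}" if "j \<in> {1..n}" for j
      unfolding col_nnz_def using HA that by (intro arg_cong[where f=card]) auto
    have rows: "\<forall>i\<in>{1..n}. row_nnz n A i \<le> row_nnz n (F n k) i \<and> col_nnz n A i \<le> col_nnz n (F n k) i"
      using r c row_bound[OF H _ k] col_bound[OF H _ k] col_F by auto
    have "nnz n A \<le> nnz n (F n k)"
      unfolding nnz_rows by (rule sum_mono) (use rows in auto)
    then show ?thesis using rows by simp
  qed
  show ?thesis using dc mx diamond_ASHM part3 by auto
qed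

end
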